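(* Let $\Sigma=\{0,1\}$ and $(p_{ij})$ a transition matrix with $p_{ij}\in(0,1)$ for all $i,j$ and $p_{ij}\ne\tfrac12$ for some $(i,j)$. For $i\in\Sigma$ let $B_n^i$ be the number of bucket operations of radix sort on $n$ i.i.d. strings from the Markov source with transition matrix $(p_{ij})$ and initial distribution $\rho_i=p_{i0}\delta_0+p_{i1}\delta_1$, and set $f_i(n)=\mathbb E[B_n^i]-\frac1H n\log n$ for $n\in\mathbb N_0$ (with $0\log 0=0$). Then there exists a constant $C>0$ such that for both $i\in\Sigma$ and all $m,n\in\mathbb N_0$, $$|f_i(m)-f_i(n)|\le C|m-n|.$$
   Context: Markov source: strings $\xi_1\xi_2\ldots$ with $\mathbb P(\xi_1=j)=\mu_j$ (here $\mu=\rho_i$), $\mathbb P(\xi_{k+1}=j\mid\xi_k=i)=p_{ij}$, independent across strings. $B_n^\mu=\sum_{j=1}^nD_j$, $D_j$ the smallest $k\ge0$ such that no other string shares its first $k$ symbols. $\pi_0=p_{10}/(p_{01}+p_{10})$, $\pi_1=p_{01}/(p_{01}+p_{10})$, $H_i=-\sum_jp_{ij}\log p_{ij}$, $H=\pi_0H_0+\pi_1H_1$. *)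

theory Defs
  imports "HOL-Probability.Probability"
begin

text \<open>Alphabet \<Sigma> = {0,1} (as natural numbers). A string is a function nat => nat,
  position t (starting at 0) holding the (t+1)-st symbol.\<close>

definition word_prob :: "(nat \<Rightarrow> real) \<Rightarrow> (nat \<Rightarrow> nat \<Rightarrow> real) \<Rightarrow> nat list \<Rightarrow> real" where
  "word_prob mu p w =
     (if w = [] then 1
      else mu (w ! 0) * (\<Prod>k<length w - 1. p (w ! k) (w ! Suc k)))"

definition markov_strings ::
  "'a measure \<Rightarrow> (nat \<Rightarrow> 'a \<Rightarrow> nat \<Rightarrow> nat) \<Rightarrow> (nat \<Rightarrow> real) \<Rightarrow> (nat \<Rightarrow> nat \<Rightarrow> real) \<Rightarrow> bool" where
  "markov_strings M xi mu p \<longleftrightarrow>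
     prob_space M \<and>
     prob_space.indep_vars M (\<lambda>_. Pi\<^sub>M UNIV (\<lambda>_. count_space UNIV)) xi UNIV \<and>
     (\<forall>j w. set w \<subseteq> {0, 1} \<longrightarrow>
        measure M {\<omega> \<in> space M. \<forall>t<length w. xi j \<omega> t = w ! t} = word_prob mu p w)"

definition depth :: "(nat \<Rightarrow> nat \<Rightarrow> nat) \<Rightarrow> nat \<Rightarrow> nat \<Rightarrow> nat" where
  "depth X n j = (LEAST k. \<forall>l<n. l \<noteq> j \<longrightarrow> (\<exists>t<k. X l t \<noteq> X j t))"

definition bucket_ops :: "(nat \<Rightarrow> nat \<Rightarrow> nat) \<Rightarrow> nat \<Rightarrow> nat" where
  "bucket_ops X n = (\<Sum>j<n. depth X n j)"

definition stat0 :: "(nat \<Rightarrow> nat \<Rightarrow> real) \<Rightarrow> real" where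
  "stat0 p = p 1 0 / (p 0 1 + p 1 0)"
definition stat1 :: "(nat \<Rightarrow> nat \<Rightarrow> real) \<Rightarrow> real" where
  "stat1 p = p 0 1 / (p 0 1 + p 1 0)"
definition row_entropy :: "(nat \<Rightarrow> nat \<Rightarrow> real) \<Rightarrow> nat \<Rightarrow> real" where
  "row_entropy p i = - (\<Sum>j\<in>{0,1::nat}. p i j * ln (p i j))"
definition entropy_rate :: "(nat \<Rightarrow> nat \<Rightarrow> real) \<Rightarrow> real" where
  "entropy_rate p = stat0 p * row_entropy p 0 + stat1 p * row_entropy p 1"

definition nlogn :: "nat \<Rightarrow> real" where
  "nlogn n = (if n = 0 then 0 else real n * ln (real n))"

definition f_dev :: "'a measure \<Rightarrow> (nat \<Rightarrow> 'a \<Rightarrow> nat \<Rightarrow> nat) \<Rightarrow> (nat \<Rightarrow> nat \<Rightarrow> real) \<Rightarrow> nat \<Rightarrow> real" where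
  "f_dev M xi p n =
     (\<integral>\<omega>. real (bucket_ops (\<lambda>j. xi j \<omega>) n) \<partial>M) - nlogn n / entropy_rate p"

end

theory Submission
  imports Defs
begin


locale mchain =
  fixes p :: "nat \<Rightarrow> nat \<Rightarrow> real"
  assumes ppos: "\<And>i j. i \<in> {0,1} \<Longrightarrow> j \<in> {0,1} \<Longrightarrow> 0 < p i j"
    and plt1: "\<And>i j. i \<in> {0,1} \<Longrightarrow> j \<in> {0,1} \<Longrightarrow> p i j < 1"
    and prow: "\<And>i. i \<in> {0,1} \<Longrightarrow> p i 0 + p i 1 = 1"
begin

definition W :: "nat \<Rightarrow> nat list set" where
  "W k = {w. set w \<subseteq> {0,1} \<and> length w = k}"

definition pr :: "nat \<Rightarrow> nat list \<Rightarrow> real" where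
  "pr i w = word_prob (p i) p w"

definition Lev :: "nat \<Rightarrow> (real \<Rightarrow> real) \<Rightarrow> nat \<Rightarrow> real" where
  "Lev i G k = (\<Sum>w\<in>W k. G (pr i w))"

definition q :: real where "q = max (max (p 0 0) (p 0 1)) (max (p 1 0) (p 1 1))"
definition pmin :: real where "pmin = min (min (p 0 0) (p 0 1)) (min (p 1 0) (p 1 1))"

lemma q_bounds: "0 < q" "q < 1" "\<And>i j. i \<in> {0,1} \<Longrightarrow> j \<in> {0,1} \<Longrightarrow> p i j \<le> q"
  using ppos plt1 unfolding q_def by (auto simp: max_def)

lemma pmin_bounds: "0 < pmin" "\<And>i j. i \<in> {0,1} \<Longrightarrow> j \<in> {0,1} \<Longrightarrow> pmin \<le> p i j"
  using ppos plt1 unfolding pmin_def by (auto simp: min_def)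

lemma finite_W: "finite (W k)"
  unfolding W_def by (rule finite_lists_length_eq) auto

lemma W_0: "W 0 = {[]}" unfolding W_def by auto

lemma W_Suc: "W (Suc k) = (\<lambda>(a,v). a # v) ` ({0,1} \<times> W k)"
  unfolding W_def
  by (auto simp: image_iff length_Suc_conv)

lemma pr_Nil: "pr i [] = 1" by (simp add: pr_def word_prob_def)

lemma pr_Cons: "pr i (a # v) = p i a * pr a v"
proof (cases v)
  case Nil thus ?thesis by (simp add: pr_def word_prob_def)
next
  case (Cons b rest)
  show ?thesis unfolding pr_def word_prob_def Cons
    by (simp del: prod.lessThan_Suc add: prod.lessThan_Suc_shift)
qed

lemma Lev_0: "Lev i G 0 = G 1"
  by (simp add: Lev_def W_0 pr_Nil)

lemma Lev_Suc: "Lev i G (Suc k) = (\<Sum>a\<in>{0,1}. Lev a (\<lambda>x. G (p i a * x)) k)"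
proof -
  have inj: "inj_on (\<lambda>(a,v). a # v) ({0::nat,1} \<times> W k)" by (auto simp: inj_on_def)
  have "Lev i G (Suc k) = (\<Sum>(a,v)\<in>{0::nat,1} \<times> W k. G (pr i (a # v)))"
    unfolding Lev_def W_Suc by (subst sum.reindex[OF inj]) (simp add: case_prod_unfold)
  also have "\<dots> = (\<Sum>a\<in>{0::nat,1}. \<Sum>v\<in>W k. G (pr i (a # v)))"
    by (subst sum.cartesian_product[symmetric]) simp
  finally show ?thesis by (simp add: Lev_def pr_Cons)
qed

lemma pr_bounds: "i \<in> {0,1} \<Longrightarrow> w \<in> W k \<Longrightarrow> 0 < pr i w \<and> pr i w \<le> q ^ k"
proof (induction k arbitrary: i w)
  case 0 thus ?case by (simp add: W_0 pr_Nil)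
next
  case (Suc k)
  then obtain a v where w: "w = a # v" "a \<in> {0,1}" "v \<in> W k" by (auto simp: W_Suc)
  from Suc.IH[OF w(2) w(3)] have v: "0 < pr a v" "pr a v \<le> q ^ k" by auto
  have "0 < p i a" "p i a \<le> q" using ppos q_bounds Suc.prems w by auto
  then show ?case using v by (auto simp: w pr_Cons intro: mult_mono)
qed

lemma Lev_mono:
  assumes "i \<in> {0,1}" "\<And>x. 0 < x \<Longrightarrow> x \<le> q ^ k \<Longrightarrow> G x \<le> G' x"
  shows "Lev i G k \<le> Lev i G' k"
  unfolding Lev_def by (rule sum_mono) (use assms pr_bounds in auto)

lemma Lev_cong:
  assumes "i \<in> {0,1}" "\<And>x. 0 < x \<Longrightarrow> x \<le> q ^ k \<Longrightarrow> G x = G' x"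
  shows "Lev i G k = Lev i G' k"
  unfolding Lev_def by (rule sum.cong) (use assms pr_bounds in auto)

lemma Lev_add: "Lev i (\<lambda>x. G x + G' x) k = Lev i G k + Lev i G' k"
  unfolding Lev_def by (simp add: sum.distrib)

lemma Lev_diff: "Lev i (\<lambda>x. G x - G' x) k = Lev i G k - Lev i G' k"
  unfolding Lev_def by (simp add: sum_subtractf)

lemma Lev_cmult: "Lev i (\<lambda>x. c * G x) k = c * Lev i G k"
  unfolding Lev_def by (simp add: sum_distrib_left)

lemma Lev_abs: "\<bar>Lev i G k\<bar> \<le> Lev i (\<lambda>x. \<bar>G x\<bar>) k"
  unfolding Lev_def by (rule sum_abs)

lemma Lev_id: "i \<in> {0,1} \<Longrightarrow> Lev i (\<lambda>x. c * x) k = c"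
proof (induction k arbitrary: i c)
  case 0 thus ?case by (simp add: Lev_0)
next
  case (Suc k)
  have "Lev i (\<lambda>x. c * x) (Suc k) = (\<Sum>a\<in>{0::nat,1}. Lev a (\<lambda>x. (c * p i a) * x) k)"
    by (simp add: Lev_Suc mult.assoc)
  also have "\<dots> = (\<Sum>a\<in>{0::nat,1}. c * p i a)"
    by (rule sum.cong) (use Suc.IH in auto)
  also have "\<dots> = c * (p i 0 + p i 1)" by (simp add: algebra_simps)
  finally show ?case using prow[OF Suc.prems] by simp
qed

lemma Lev_nonneg: "i \<in> {0,1} \<Longrightarrow> (\<And>x. 0 < x \<Longrightarrow> x \<le> q ^ k \<Longrightarrow> 0 \<le> G x) \<Longrightarrow> 0 \<le> Lev i G k"
  using Lev_mono[of i k "\<lambda>_. 0" G] by (simp add: Lev_def)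

definition SL :: "nat \<Rightarrow> (real \<Rightarrow> real) \<Rightarrow> nat \<Rightarrow> real" where
  "SL i G K = (\<Sum>k<K. Lev i G k)"

lemma SL_0: "SL i G 0 = 0" by (simp add: SL_def)

lemma SL_Suc: "SL i G (Suc K) = G 1 + (\<Sum>a\<in>{0,1}. SL a (\<lambda>x. G (p i a * x)) K)"
proof -
  have "SL i G (Suc K) = Lev i G 0 + (\<Sum>k<K. Lev i G (Suc k))"
    unfolding SL_def by (rule sum.lessThan_Suc_shift)
  also have "(\<Sum>k<K. Lev i G (Suc k)) = (\<Sum>a\<in>{0,1}. SL a (\<lambda>x. G (p i a * x)) K)"
    unfolding Lev_Suc SL_def by (rule sum.swap)
  finally show ?thesis by (simp add: Lev_0)
qed

end


context mchain
begin

definition AA :: real where "AA = max 2 (1 / pmin)"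

lemma SL_fun_shift:
  fixes c t :: real and F :: "real \<Rightarrow> real"
  assumes "0 < c"
  shows "(\<lambda>x. if t \<le> c * x then F (c * x) else 0) = (\<lambda>x. if t / c \<le> x then F (c * x) else 0)"
  by (intro ext) (simp add: pos_divide_le_eq[OF assms] mult.commute)

lemma count_bound:
  assumes "i \<in> {0,1}" "0 < t"
  shows "t * SL i (\<lambda>x. if t \<le> x then 1 else 0) K \<le> (if t \<le> 1 then AA - t else 0)"
  using assms
proof (induction K arbitrary: i t)
  case 0 thus ?case by (simp add: SL_0 AA_def max_def)
next
  case (Suc K)
  define B where "B = (\<lambda>s::real. if s \<le> 1 then AA - s else 0)"
  have pa: "\<And>a. a \<in> {0,1} \<Longrightarrow> 0 < p i a" using ppos Suc.prems by auto
  have eq: "SL i (\<lambda>x. if t \<le> x then 1 else 0) (Suc K) =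
      (if t \<le> 1 then 1 else 0) + (\<Sum>a\<in>{0,1}. SL a (\<lambda>x. if t / p i a \<le> x then 1 else 0) K)"
    unfolding SL_Suc using SL_fun_shift[OF pa, of 0 t "\<lambda>_. 1::real"] SL_fun_shift[OF pa, of 1 t "\<lambda>_. 1::real"] by simp
  have IH: "\<And>a. a \<in> {0,1} \<Longrightarrow> p i a * ((t / p i a) * SL a (\<lambda>x. if t / p i a \<le> x then 1 else 0) K)
           \<le> p i a * B (t / p i a)"
  proof -
    fix a :: nat assume a: "a \<in> {0,1}"
    have "(t / p i a) * SL a (\<lambda>x. if t / p i a \<le> x then 1 else 0) K \<le> B (t / p i a)"
      unfolding B_def using Suc.IH[OF a, of "t / p i a"] pa[OF a] Suc.prems(2) by simp
    then show "?thesis a" by (rule mult_left_mono) (use pa[OF a] in simp)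
  qed
  have "t * SL i (\<lambda>x. if t \<le> x then 1 else 0) (Suc K) =
      t * (if t \<le> 1 then 1 else 0) + (\<Sum>a\<in>{0,1}. p i a * ((t / p i a) * SL a (\<lambda>x. if t / p i a \<le> x then 1 else 0) K))"
    unfolding eq distrib_left sum_distrib_left using pa[of 0] pa[of 1] by (intro arg_cong2[where f="(+)"] sum.cong) auto
  also have "\<dots> \<le> t * (if t \<le> 1 then 1 else 0) + (\<Sum>a\<in>{0,1}. p i a * B (t / p i a))"
    using IH by (intro add_left_mono sum_mono) auto
  also have "\<dots> \<le> B t"
  proof -
    have p0: "0 < p i 0" "0 < p i 1" using pa by auto
    have rs: "p i 0 + p i 1 = 1" using prow Suc.prems by auto
    have pm: "pmin \<le> p i 0" "pmin \<le> p i 1" using pmin_bounds Suc.prems by auto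
    have A2: "2 \<le> AA" "1 / pmin \<le> AA" by (auto simp: AA_def)
    have AP: "1 \<le> pmin * AA" using A2(2) pmin_bounds(1) by (simp add: field_simps)
    have "pmin * AA \<le> p i 0 * AA" "pmin * AA \<le> p i 1 * AA"
      using pm A2 by (auto intro: mult_right_mono)
    then have "1 \<le> p i 0 * AA" "1 \<le> p i 1 * AA" using AP by linarith+
    moreover have h: "\<And>a. a\<in>{0,1} \<Longrightarrow> p i a * B (t / p i a) = (if t \<le> p i a then p i a * AA - t else 0)"
      unfolding B_def using p0 by (auto simp: field_simps)
    moreover have "p i 0 * AA + p i 1 * AA = AA" using rs by (metis distrib_right mult_1)
    ultimately show ?thesis
      using p0 Suc.prems(2) A2 plt1[of i 0] plt1[of i 1] Suc.prems(1)
      by (simp add: h B_def[THEN fun_cong, of t])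
  qed
  finally show ?case unfolding B_def .
qed

lemma SL_cmult: "SL i (\<lambda>x. c * G x) K = c * SL i G K"
  unfolding SL_def Lev_cmult by (simp add: sum_distrib_left)

lemma SL_cong: "i \<in> {0,1} \<Longrightarrow> (\<And>x. 0 < x \<Longrightarrow> x \<le> 1 \<Longrightarrow> G x = G' x) \<Longrightarrow> SL i G K = SL i G' K"
  unfolding SL_def
proof (intro sum.cong refl Lev_cong)
  fix k x assume "i \<in> {0,1}" "\<And>x. 0 < x \<Longrightarrow> x \<le> 1 \<Longrightarrow> G x = G' x" "0 < x" "x \<le> q ^ k"
  moreover have "q ^ k \<le> 1" using q_bounds by (simp add: power_le_one)
  ultimately show "G x = G' x" by auto
qed

definition MM :: real where "MM = 1 / (1 - q)"

lemma sq_bound: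
  assumes "i \<in> {0,1}" "0 < t"
  shows "SL i (\<lambda>x. if x < t then x^2 else 0) K \<le> MM * min t 1"
  using assms
proof (induction K arbitrary: i t)
  case 0 thus ?case using q_bounds by (simp add: SL_0 MM_def)
next
  case (Suc K)
  have pa: "\<And>a. a \<in> {0,1} \<Longrightarrow> 0 < p i a" using ppos Suc.prems by auto
  have p0: "0 < p i 0" "0 < p i 1" using pa by auto
  have fe: "\<And>a. a \<in> {0,1} \<Longrightarrow> (\<lambda>x. if p i a * x < t then (p i a * x)^2 else 0) =
      (\<lambda>x. (p i a)^2 * (if x < t / p i a then x^2 else 0))"
    using pa by (auto intro!: ext simp: pos_less_divide_eq power_mult_distrib mult.commute)
  have eq: "SL i (\<lambda>x. if x < t then x^2 else 0) (Suc K) =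
      (if 1 < t then 1 else 0) + (\<Sum>a\<in>{0,1}. (p i a)^2 * SL a (\<lambda>x. if x < t / p i a then x^2 else 0) K)"
    unfolding SL_Suc using fe[of 0] fe[of "Suc 0"] by (simp add: SL_cmult)
  have MMq: "1 + MM * q = MM" "0 < MM" using q_bounds by (auto simp: MM_def field_simps)
  have b: "\<And>a. a \<in> {0,1} \<Longrightarrow> (p i a)^2 * SL a (\<lambda>x. if x < t / p i a then x^2 else 0) K
      \<le> MM * p i a * t \<and> (p i a)^2 * SL a (\<lambda>x. if x < t / p i a then x^2 else 0) K \<le> MM * q * p i a"
  proof -
    fix a :: nat assume a: "a \<in> {0,1}"
    have S: "SL a (\<lambda>x. if x < t / p i a then x^2 else 0) K \<le> MM * min (t / p i a) 1"
      using Suc.IH[OF a] pa[OF a] Suc.prems by simp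
    have pq: "p i a \<le> q" using q_bounds Suc.prems a by auto
    have c1: "(p i a)^2 * (MM * min (t / p i a) 1) \<le> MM * p i a * t"
    proof -
      have "(p i a)^2 * (MM * min (t / p i a) 1) \<le> (p i a)^2 * (MM * (t / p i a))"
        using MMq pa[OF a] by (intro mult_left_mono) auto
      also have "\<dots> = MM * p i a * t" using pa[OF a] by (simp add: power2_eq_square field_simps)
      finally show ?thesis .
    qed
    have c2: "(p i a)^2 * (MM * min (t / p i a) 1) \<le> MM * q * p i a"
    proof -
      have "(p i a)^2 * (MM * min (t / p i a) 1) \<le> (p i a)^2 * MM"
        using MMq pa[OF a] by (intro mult_left_mono) auto
      also have "\<dots> \<le> (q * p i a) * MM" using pa[OF a] pq MMq
        by (intro mult_right_mono) (auto simp: power2_eq_square)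
      finally show ?thesis by (simp add: algebra_simps)
    qed
    have "(p i a)^2 * SL a (\<lambda>x. if x < t / p i a then x^2 else 0) K \<le> (p i a)^2 * (MM * min (t / p i a) 1)"
      using S by (intro mult_left_mono) auto
    then show "?thesis a" using c1 c2 by linarith
  qed
  have rs: "p i 0 + p i 1 = 1" using prow Suc.prems by auto
  have s1: "MM * p i 0 * t + MM * p i 1 * t = MM * t"
  proof -
    have "MM * p i 0 * t + MM * p i 1 * t = MM * t * (p i 0 + p i 1)" by (simp add: algebra_simps)
    thus ?thesis using rs by simp
  qed
  have s2: "MM * q * p i 0 + MM * q * p i 1 = MM * q"
  proof -
    have "MM * q * p i 0 + MM * q * p i 1 = MM * q * (p i 0 + p i 1)" by (simp add: algebra_simps)
    thus ?thesis using rs by simp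
  qed
  show ?case
  proof (cases "1 < t")
    case True
    then show ?thesis unfolding eq using b[of 0] b[of "Suc 0"] s2 MMq by simp
  next
    case False
    then show ?thesis unfolding eq using b[of 0] b[of "Suc 0"] s1 by simp
  qed
qed

definition HH :: real where "HH = entropy_rate p"
definition hh :: "nat \<Rightarrow> real" where
  "hh i = (if i = 0 then (1 - row_entropy p 0 / HH) / p 0 1 else 0)"
definition V :: "nat \<Rightarrow> real \<Rightarrow> real" where
  "V i t = - ln t / HH + hh i"
definition KK :: real where "KK = ln (1 / pmin) / HH + \<bar>hh 0\<bar>"

lemma row_entropy_pos: "i \<in> {0,1} \<Longrightarrow> 0 < row_entropy p i"
proof -
  assume i: "i \<in> {0,1}"
  have "\<And>j. j \<in> {0,1} \<Longrightarrow> p i j * ln (p i j) < 0"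
    using ppos[OF i] plt1[OF i] by (simp add: mult_pos_neg)
  then have "p i 0 * ln (p i 0) + p i 1 * ln (p i 1) < 0" by (smt (verit) insert_iff)
  then show ?thesis by (simp add: row_entropy_def)
qed

lemma HH_eq: "HH * (p 0 1 + p 1 0) = p 1 0 * row_entropy p 0 + p 0 1 * row_entropy p 1"
proof -
  have "p 0 1 + p 1 0 > 0" using ppos[of 0 1] ppos[of 1 0] by simp
  moreover have "HH = (p 1 0 * row_entropy p 0 + p 0 1 * row_entropy p 1) / (p 0 1 + p 1 0)"
    unfolding HH_def entropy_rate_def stat0_def stat1_def by (simp add: add_divide_distrib)
  ultimately show ?thesis by simp
qed

lemma HH_pos: "0 < HH"
proof -
  have "0 < p 1 0 * row_entropy p 0 + p 0 1 * row_entropy p 1"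
    using row_entropy_pos[of 0] row_entropy_pos[of 1] ppos[of 1 0] ppos[of 0 1] by (intro add_pos_pos mult_pos_pos) auto
  moreover have "p 0 1 + p 1 0 > 0" using ppos[of 0 1] ppos[of 1 0] by simp
  ultimately show ?thesis using HH_eq by (metis zero_less_mult_pos2)
qed

lemma poisson:
  assumes i: "i \<in> {0,1}" and t: "0 < t"
  shows "1 + (\<Sum>a\<in>{0,1}. p i a * V a (t / p i a)) = V i t"
proof -
  have p: "0 < p i 0" "0 < p i 1" using ppos i by auto
  have rs: "p i 0 + p i 1 = 1" using prow i by auto
  have ln: "\<And>a. a \<in> {0,1} \<Longrightarrow> ln (t / p i a) = ln t - ln (p i a)"
  proof -
    fix a :: nat assume a: "a \<in> {0,1}"
    have "0 < p i a" using ppos[OF i a] .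
    then show "?thesis a" using t by (simp add: ln_div)
  qed
  have "1 + (\<Sum>a\<in>{0,1}. p i a * V a (t / p i a))
      = 1 + (p i 0 * (- (ln t - ln (p i 0)) / HH + hh 0) + p i 1 * (- (ln t - ln (p i 1)) / HH + hh 1))"
    using HH_pos by (simp add: V_def ln[of 0] ln[of "Suc 0"]) (simp add: field_simps)
  also have "\<dots> = - ln t / HH * (p i 0 + p i 1) + (1 - row_entropy p i / HH + p i 0 * hh 0)"
    using HH_pos by (simp add: row_entropy_def hh_def field_simps)
  also have "\<dots> = - ln t / HH + (1 - row_entropy p i / HH + p i 0 * hh 0)" using rs by simp
  also have "1 - row_entropy p i / HH + p i 0 * hh 0 = hh i"
  proof (cases "i = 0")
    case True
    have e1: "p 0 0 = 1 - p 0 1" using prow[of 0] by simp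
    have "p 0 1 * hh 0 = 1 - row_entropy p 0 / HH" using ppos[of 0 1] by (simp add: hh_def)
    then have "1 - row_entropy p 0 / HH + p 0 0 * hh 0 = hh 0" unfolding e1 by (simp add: algebra_simps)
    then show ?thesis using True by simp
  next
    case False
    then have i1: "i = 1" using i by auto
    have "1 - row_entropy p 1 / HH + p 1 0 * ((1 - row_entropy p 0 / HH) / p 0 1) = 0"
      using HH_eq HH_pos ppos[of 0 1] by (simp add: field_simps) (metis distrib_left)
    then show ?thesis using i1 by (simp add: hh_def)
  qed
  finally show ?thesis by (simp add: V_def)
qed

lemma SL_zero: "SL i (\<lambda>_. 0) K = 0" by (simp add: SL_def Lev_def)

lemma U_big: "i \<in> {0,1} \<Longrightarrow> 1 < t \<Longrightarrow> SL i (\<lambda>x. if t \<le> x then x else 0) K = 0"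
  using SL_cong[of i "\<lambda>x. if t \<le> x then x else 0" "\<lambda>_. 0" K] SL_zero by auto

lemma V_big: assumes "i \<in> {0,1}" "1 < t" "t \<le> 1 / pmin" shows "\<bar>V i t\<bar> \<le> KK"
proof -
  have "0 < ln t" using assms by simp
  moreover have "ln t \<le> ln (1 / pmin)" using assms pmin_bounds(1) by (subst ln_le_cancel_iff) auto
  ultimately have "\<bar>- ln t / HH\<bar> \<le> ln (1 / pmin) / HH" using HH_pos by (simp add: divide_right_mono)
  moreover have "\<bar>hh i\<bar> \<le> \<bar>hh 0\<bar>" by (simp add: hh_def)
  ultimately show ?thesis unfolding V_def KK_def by linarith
qed

lemma U_bound:
  assumes "i \<in> {0,1}" "q ^ K < t" "t \<le> 1 / pmin"
  shows "\<bar>SL i (\<lambda>x. if t \<le> x then x else 0) K - V i t\<bar> \<le> KK"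
  using assms
proof (induction K arbitrary: i t)
  case 0
  then show ?case using U_big V_big by simp
next
  case (Suc K)
  have t0: "0 < t" using Suc.prems(2) q_bounds by (meson less_trans zero_less_power)
  show ?case
  proof (cases "1 < t")
    case True then show ?thesis using U_big V_big Suc.prems by simp
  next
    case False
    have pa: "\<And>a. a \<in> {0,1} \<Longrightarrow> 0 < p i a" using ppos Suc.prems by auto
    have fe: "\<And>a. a \<in> {0,1} \<Longrightarrow> (\<lambda>x. if t \<le> p i a * x then p i a * x else 0) =
        (\<lambda>x. p i a * (if t / p i a \<le> x then x else 0))"
      using pa by (auto intro!: ext simp: pos_divide_le_eq mult.commute)
    have eq: "SL i (\<lambda>x. if t \<le> x then x else 0) (Suc K) =
      1 + (\<Sum>a\<in>{0,1}. p i a * SL a (\<lambda>x. if t / p i a \<le> x then x else 0) K)"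
      unfolding SL_Suc using fe[of 0] fe[of "Suc 0"] False by (simp add: SL_cmult)
    have "SL i (\<lambda>x. if t \<le> x then x else 0) (Suc K) - V i t =
       (\<Sum>a\<in>{0,1}. p i a * (SL a (\<lambda>x. if t / p i a \<le> x then x else 0) K - V a (t / p i a)))"
      unfolding eq poisson[OF Suc.prems(1) t0, symmetric] by (simp add: algebra_simps)
    also have "\<bar>\<dots>\<bar> \<le> (\<Sum>a\<in>{0,1}. p i a * KK)"
    proof -
      have "\<And>a. a \<in> {0,1} \<Longrightarrow> \<bar>p i a * (SL a (\<lambda>x. if t / p i a \<le> x then x else 0) K - V a (t / p i a))\<bar> \<le> p i a * KK"
      proof -
        fix a :: nat assume a: "a \<in> {0,1}"
        have pq: "p i a \<le> q" "pmin \<le> p i a" using q_bounds pmin_bounds Suc.prems a by auto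
        have "q ^ K * p i a \<le> q ^ K * q" using pq q_bounds by (intro mult_left_mono) auto
        then have "q ^ K * p i a < t" using Suc.prems(2) by (simp add: mult.commute)
        then have c1: "q ^ K < t / p i a" using pa[OF a] by (simp add: pos_less_divide_eq)
        have "t / p i a \<le> 1 / p i a" using False pa[OF a] by (simp add: divide_right_mono)
        also have "\<dots> \<le> 1 / pmin" using pq pmin_bounds by (simp add: frac_le)
        finally have c2: "t / p i a \<le> 1 / pmin" .
        have "\<bar>SL a (\<lambda>x. if t / p i a \<le> x then x else 0) K - V a (t / p i a)\<bar> \<le> KK"
          using Suc.IH[OF a c1 c2] .
        then show "?thesis a" using pa[OF a] by (simp add: abs_mult)
      qed
      then show ?thesis by (intro order_trans[OF sum_abs] sum_mono) auto
    qed
    also have "\<dots> = KK" using prow Suc.prems by (simp add: distrib_right[symmetric])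
    finally show ?thesis .
  qed
qed

end



lemma exp_cube: "0 \<le> (y::real) \<Longrightarrow> y ^ 3 / 27 \<le> exp y"
proof -
  assume y: "0 \<le> y"
  have "exp y = exp (y / 3) ^ 3" by (simp add: exp_of_nat_mult[symmetric])
  moreover have "y / 3 \<le> exp (y / 3)" using exp_ge_add_one_self[of "y/3"] by linarith
  ultimately have "(y / 3) ^ 3 \<le> exp y" using y by (metis power_mono divide_nonneg_pos zero_less_numeral)
  then show ?thesis by (simp add: power_divide)
qed

lemma pow_decay:
  fixes x :: real assumes "0 \<le> x" "x \<le> 1" "0 < m"
  shows "(1 - x) ^ m * (real m * x) ^ 3 \<le> 27"
proof -
  have "(1 - x) ^ m \<le> exp (- x) ^ m"
    using assms exp_ge_add_one_self[of "-x"] by (intro power_mono) auto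
  also have "\<dots> = exp (- (real m * x))" by (simp add: exp_of_nat_mult[symmetric])
  finally have a: "(1 - x) ^ m \<le> exp (- (real m * x))" .
  have b: "(real m * x) ^ 3 / 27 \<le> exp (real m * x)" using assms by (intro exp_cube) simp
  have "(1 - x) ^ m * (real m * x) ^ 3 \<le> exp (- (real m * x)) * (real m * x) ^ 3"
    using a assms by (intro mult_right_mono) auto
  also have "\<dots> \<le> exp (- (real m * x)) * (27 * exp (real m * x))"
    using b by (intro mult_left_mono) auto
  also have "\<dots> = 27" by (simp add: exp_minus field_simps)
  finally show ?thesis .
qed

definition Phi :: "nat \<Rightarrow> real \<Rightarrow> real" where
  "Phi n x = x * (1 - (1 - x) ^ (n - 1) * (1 - (real n + 1) * x))"

lemma Phi_big:
  fixes x :: real assumes n: "1 \<le> n" and x: "1 / real n \<le> x" "x \<le> 1"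
  shows "\<bar>Phi n x - x\<bar> \<le> 648 / real n"
proof (cases "n = 1")
  case True
  then have "x = 1" using x by simp
  then show ?thesis using True by (simp add: Phi_def)
next
  case False
  define m where "m = n - 1"
  have m: "0 < m" "real n \<le> 2 * real m" using n False by (auto simp: m_def)
  have "0 < 1 / real n" using n by simp
  then have x0: "0 < x" using x by linarith
  have nx: "1 \<le> real n * x" using x n by (simp add: field_simps)
  have "Phi n x - x = - (x * (1 - x) ^ m * (1 - (real n + 1) * x))"
    by (simp add: Phi_def m_def algebra_simps)
  moreover have "0 \<le> (1 - x) ^ m" using x by simp
  ultimately have "\<bar>Phi n x - x\<bar> = x * (1 - x) ^ m * \<bar>1 - (real n + 1) * x\<bar>"
    using x0 by (simp add: abs_mult)
  also have "\<dots> \<le> x * (1 - x) ^ m * (3 * real n * x)"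
    using x0 x nx by (intro mult_left_mono) (auto simp: algebra_simps)
  also have "\<dots> = 3 * real n * x ^ 2 * (1 - x) ^ m" by (simp add: power2_eq_square)
  also have "\<dots> \<le> 3 * real n * x ^ 2 * (27 / (real m * x) ^ 3)"
  proof -
    have "(1 - x) ^ m * (real m * x) ^ 3 \<le> 27" using pow_decay x0 x m by auto
    then have "(1 - x) ^ m \<le> 27 / (real m * x) ^ 3" using m x0 by (simp add: field_simps)
    then show ?thesis using x0 n by (intro mult_left_mono) auto
  qed
  also have "\<dots> = 81 * real n / (real m ^ 3 * x)" using x0 m by (simp add: field_simps power3_eq_cube power2_eq_square)
  also have "\<dots> \<le> 81 * real n / (real m ^ 3 * (1 / real n))"
    using x0 m n x by (intro divide_left_mono mult_left_mono mult_pos_pos) auto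
  also have "\<dots> = 81 * real n ^ 2 / real m ^ 3" using n by (simp add: field_simps power2_eq_square)
  also have "\<dots> \<le> 648 / real n"
  proof -
    have "real n ^ 3 \<le> (2 * real m) ^ 3" using m by (intro power_mono) auto
    then have "81 * real n ^ 3 \<le> 648 * real m ^ 3" by simp
    then show ?thesis using m n by (simp add: field_simps power3_eq_cube power2_eq_square)
  qed
  finally show ?thesis .
qed

lemma Phi_small:
  fixes x :: real assumes n: "1 \<le> n" and x: "0 < x" "x < 1 / real n"
  shows "0 \<le> Phi n x \<and> Phi n x \<le> 4 * real n * x ^ 2"
proof -
  define m where "m = n - 1"
  have nx: "real n * x < 1" using x n by (simp add: field_simps)
  have "1 / real n \<le> 1" using n by simp
  then have x1: "x < 1" using x by linarith
  have rm: "real m = real n - 1" using n by (simp add: m_def)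
  have pm: "0 \<le> (1 - x) ^ m" "(1 - x) ^ m \<le> 1" using x x1 by (auto intro: power_le_one)
  have bern: "1 - real m * x \<le> (1 - x) ^ m"
    using Bernoulli_inequality[of "-x" m] x1 by simp
  have psi_nonneg: "(1 - x) ^ m * (1 - (real n + 1) * x) \<le> 1"
  proof (cases "0 \<le> 1 - (real n + 1) * x")
    case True
    have "(1 - x) ^ m * (1 - (real n + 1) * x) \<le> 1 * 1"
      using pm True x by (intro mult_mono) auto
    then show ?thesis by simp
  next
    case False
    then show ?thesis using pm by (smt (verit) mult_nonneg_nonpos)
  qed
  have psi_up: "1 - (1 - x) ^ m * (1 - (real n + 1) * x) \<le> 4 * real n * x"
  proof (cases "0 \<le> 1 - (real n + 1) * x")
    case True
    have "(1 - real m * x) * (1 - (real n + 1) * x) \<le> (1 - x) ^ m * (1 - (real n + 1) * x)"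
      using bern True by (intro mult_right_mono) auto
    moreover have "1 - real m * x - (real n + 1) * x \<le> (1 - real m * x) * (1 - (real n + 1) * x)"
    proof -
      have "0 \<le> real m * x" using x by simp
      moreover have "0 \<le> (real n + 1) * x" using x by simp
      ultimately have "0 \<le> (real m * x) * ((real n + 1) * x)" by simp
      then show ?thesis by (simp add: algebra_simps)
    qed
    ultimately have "1 - real m * x - (real n + 1) * x \<le> (1 - x) ^ m * (1 - (real n + 1) * x)" by linarith
    moreover have "real m * x = real n * x - x" unfolding rm by (simp add: algebra_simps)
    moreover have "0 \<le> real n * x" using x by simp
    ultimately show ?thesis by (simp add: algebra_simps)
  next
    case False
    then have h: "1 < (real n + 1) * x" by simp
    have "real n + 1 \<le> 2 * real n" using n by simp
    then have "(real n + 1) * x \<le> 2 * real n * x" using x by (intro mult_right_mono) auto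
    then have a: "1 < 2 * real n * x" using h by simp
    have "- ((1 - x) ^ m * (1 - (real n + 1) * x)) = (1 - x) ^ m * ((real n + 1) * x - 1)" by (simp add: algebra_simps)
    also have "\<dots> \<le> 1 * ((real n + 1) * x - 1)" using pm h by (intro mult_right_mono) auto
    finally show ?thesis using a \<open>(real n + 1) * x \<le> 2 * real n * x\<close> by simp
  qed
  have "0 \<le> Phi n x" unfolding Phi_def m_def[symmetric] using psi_nonneg x by simp
  moreover have "Phi n x \<le> x * (4 * real n * x)" unfolding Phi_def m_def[symmetric]
    using psi_up x by (intro mult_left_mono) auto
  ultimately show ?thesis by (simp add: power2_eq_square algebra_simps)
qed

context mchain
begin

lemma Lev_eventually_zero:
  assumes "i \<in> {0,1}" "q ^ K0 < t" "K0 \<le> k" "\<And>x. x < t \<Longrightarrow> G x = 0"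
  shows "Lev i G k = 0"
proof -
  have "q ^ k \<le> q ^ K0" using assms q_bounds by (intro power_decreasing) auto
  then have "Lev i G k = Lev i (\<lambda>_. 0) k" using assms by (intro Lev_cong) auto
  then show ?thesis by (simp add: Lev_def)
qed

lemma suminf_eventually_zero:
  assumes "i \<in> {0,1}" "q ^ K0 < t" "\<And>x. x < t \<Longrightarrow> G x = 0"
  shows "summable (\<lambda>k. Lev i G k)" "(\<Sum>k. Lev i G k) = SL i G K0"
proof -
  have z: "\<And>k. k \<notin> {..<K0} \<Longrightarrow> Lev i G k = 0"
    using Lev_eventually_zero[OF assms(1,2) _ assms(3)] by auto
  show "summable (\<lambda>k. Lev i G k)" by (rule summable_finite[of "{..<K0}"]) (use z in auto)
  show "(\<Sum>k. Lev i G k) = SL i G K0" unfolding SL_def by (rule suminf_finite) (use z in auto)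
qed

definition CB :: real where "CB = 648 * AA + 4 * MM + KK + \<bar>hh 0\<bar>"

lemma S_bound:
  assumes i: "i \<in> {0,1}" and n: "1 \<le> n"
  shows "summable (\<lambda>k. Lev i (Phi n) k) \<and> \<bar>(\<Sum>k. Lev i (Phi n) k) - ln (real n) / HH\<bar> \<le> CB"
proof -
  define t where "t = 1 / real n"
  have t0: "0 < t" "t \<le> 1" using n by (auto simp: t_def)
  obtain K0 where K0: "q ^ K0 < t" using real_arch_pow_inv[OF t0(1) q_bounds(2)] by auto
  define g1 where "g1 = (\<lambda>x::real. if t \<le> x then x else 0)"
  define g2 where "g2 = (\<lambda>x::real. if t \<le> x then 1 else (0::real))"
  define g3 where "g3 = (\<lambda>x::real. if x < t then x^2 else 0)"
  define e where "e = (\<lambda>x. Phi n x - g1 x)"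
  have sa: "summable (\<lambda>k. Lev i g1 k)" "(\<Sum>k. Lev i g1 k) = SL i g1 K0"
    using suminf_eventually_zero[OF i K0, of g1] by (auto simp: g1_def)
  have sb: "summable (\<lambda>k. Lev i g2 k)" "(\<Sum>k. Lev i g2 k) = SL i g2 K0"
    using suminf_eventually_zero[OF i K0, of g2] by (auto simp: g2_def)
  have c_nonneg: "\<And>k. 0 \<le> Lev i g3 k" using i by (intro Lev_nonneg) (auto simp: g3_def)
  have c_part: "\<And>K. (\<Sum>k<K. Lev i g3 k) \<le> MM * t"
    using sq_bound[OF i t0(1)] t0 unfolding SL_def g3_def by (metis min.absorb1)
  have sc: "summable (\<lambda>k. Lev i g3 k)" by (rule summableI_nonneg_bounded[OF c_nonneg c_part])
  have sc_le: "(\<Sum>k. Lev i g3 k) \<le> MM * t" by (rule suminf_le_const[OF sc c_part])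
  have SLb: "SL i g2 K0 \<le> AA / t"
    using count_bound[OF i t0(1), of K0] t0 unfolding g2_def by (simp add: field_simps)
  have eb: "\<And>k. \<bar>Lev i e k\<bar> \<le> (648 / real n) * Lev i g2 k + (4 * real n) * Lev i g3 k"
  proof -
    fix k
    have "\<bar>Lev i e k\<bar> \<le> Lev i (\<lambda>x. \<bar>e x\<bar>) k" by (rule Lev_abs)
    also have "\<dots> \<le> Lev i (\<lambda>x. (648 / real n) * g2 x + (4 * real n) * g3 x) k"
    proof (rule Lev_mono[OF i])
      fix x :: real assume x: "0 < x" "x \<le> q ^ k"
      have x1: "x \<le> 1" using x q_bounds by (meson order_trans power_le_one less_imp_le)
      show "\<bar>e x\<bar> \<le> (648 / real n) * g2 x + (4 * real n) * g3 x"
      proof (cases "t \<le> x")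
        case True
        then show ?thesis using Phi_big[OF n _ x1] by (simp add: e_def g1_def g2_def g3_def t_def)
      next
        case False
        then show ?thesis using Phi_small[OF n x(1)] by (simp add: e_def g1_def g2_def g3_def t_def)
      qed
    qed
    also have "\<dots> = (648 / real n) * Lev i g2 k + (4 * real n) * Lev i g3 k"
      by (simp only: Lev_add Lev_cmult)
    finally show "\<bar>Lev i e k\<bar> \<le> (648 / real n) * Lev i g2 k + (4 * real n) * Lev i g3 k" .
  qed
  have sbc: "summable (\<lambda>k. (648 / real n) * Lev i g2 k + (4 * real n) * Lev i g3 k)"
    by (intro summable_add summable_mult sb sc)
  have se: "summable (\<lambda>k. Lev i e k)"
    by (rule summable_comparison_test'[OF sbc]) (use eb in simp)
  have sabs: "summable (\<lambda>k. \<bar>Lev i e k\<bar>)"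
    by (rule summable_comparison_test'[OF sbc]) (use eb in simp)
  have Phi_split: "\<And>k. Lev i (Phi n) k = Lev i g1 k + Lev i e k"
    by (simp add: e_def Lev_add[symmetric])
  have sPhi: "summable (\<lambda>k. Lev i (Phi n) k)" unfolding Phi_split by (intro summable_add sa se)
  have sumPhi: "(\<Sum>k. Lev i (Phi n) k) = SL i g1 K0 + (\<Sum>k. Lev i e k)"
    unfolding Phi_split suminf_add[OF sa(1) se, symmetric] sa(2) ..
  have "\<bar>\<Sum>k. Lev i e k\<bar> \<le> (\<Sum>k. \<bar>Lev i e k\<bar>)" by (rule summable_rabs[OF sabs])
  also have "\<dots> \<le> (\<Sum>k. (648 / real n) * Lev i g2 k + (4 * real n) * Lev i g3 k)"
    by (rule suminf_le[OF eb sabs sbc])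
  also have "\<dots> = (648 / real n) * SL i g2 K0 + (4 * real n) * (\<Sum>k. Lev i g3 k)"
    using sb sc by (simp only: suminf_add[symmetric] suminf_mult summable_mult)
  also have "\<dots> \<le> (648 / real n) * (AA / t) + (4 * real n) * (MM * t)"
    using SLb sc_le n by (intro add_mono mult_left_mono) auto
  also have "\<dots> = 648 * AA + 4 * MM" using n by (simp add: t_def)
  finally have eB: "\<bar>\<Sum>k. Lev i e k\<bar> \<le> 648 * AA + 4 * MM" .
  have "q ^ K0 < t" "t \<le> 1 / pmin" using K0 t0 pmin_bounds plt1[of 0 0]
    by (auto simp: pmin_def min_def intro: order_trans[of _ 1] simp add: le_divide_eq_1_pos)
  from U_bound[OF i this] have uB: "\<bar>SL i g1 K0 - V i t\<bar> \<le> KK" unfolding g1_def .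
  have "V i t = ln (real n) / HH + hh i" using n by (simp add: V_def t_def ln_div)
  moreover have "\<bar>hh i\<bar> \<le> \<bar>hh 0\<bar>" by (simp add: hh_def)
  ultimately have "\<bar>(\<Sum>k. Lev i (Phi n) k) - ln (real n) / HH\<bar> \<le> CB"
    unfolding sumPhi CB_def using eB uB by linarith
  then show ?thesis using sPhi by simp
qed

end


context mchain
begin
definition phi :: "nat \<Rightarrow> real \<Rightarrow> real" where
  "phi n x = x * (1 - (1 - x) ^ (n - 1))"

definition FF :: "nat \<Rightarrow> nat \<Rightarrow> real" where
  "FF i n = (\<Sum>k. Lev i (\<lambda>x. real n * phi n x) k)"

lemma phi_bounds: assumes "0 \<le> x" "x \<le> 1" shows "0 \<le> phi n x \<and> phi n x \<le> real n * x ^ 2"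
proof -
  have "(1 - x) ^ (n - 1) \<le> 1" using assms by (intro power_le_one) auto
  moreover have "1 - real (n - 1) * x \<le> (1 - x) ^ (n - 1)"
    using Bernoulli_inequality[of "-x" "n - 1"] assms by simp
  moreover have "real (n - 1) * x \<le> real n * x" using assms by (intro mult_right_mono) auto
  ultimately have "0 \<le> 1 - (1 - x) ^ (n - 1)" "1 - (1 - x) ^ (n - 1) \<le> real n * x" by auto
  then have "0 \<le> x * (1 - (1 - x) ^ (n - 1))" "x * (1 - (1 - x) ^ (n - 1)) \<le> x * (real n * x)"
    using assms by (auto intro: mult_left_mono)
  moreover have "x * (real n * x) = real n * x ^ 2" by (simp add: power2_eq_square)
  ultimately show ?thesis unfolding phi_def by simp
qed

lemma FF_summable: assumes i: "i \<in> {0,1}" shows "summable (\<lambda>k. Lev i (\<lambda>x. real n * phi n x) k)"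
proof (rule summable_comparison_test'[where N=0])
  show "summable (\<lambda>k. real n ^ 2 * q ^ k)" using q_bounds by (intro summable_mult summable_geometric) auto
  fix k :: nat
  have "0 \<le> Lev i (\<lambda>x. real n * phi n x) k"
  proof (rule Lev_nonneg[OF i])
    fix x :: real assume "0 < x" "x \<le> q ^ k"
    moreover have "q ^ k \<le> 1" using q_bounds by (simp add: power_le_one)
    ultimately show "0 \<le> real n * phi n x" using phi_bounds[of x n] by auto
  qed
  moreover have "Lev i (\<lambda>x. real n * phi n x) k \<le> Lev i (\<lambda>x. (real n ^ 2 * q ^ k) * x) k"
  proof (rule Lev_mono[OF i])
    fix x :: real assume x: "0 < x" "x \<le> q ^ k"
    moreover have "q ^ k \<le> 1" using q_bounds by (simp add: power_le_one)
    ultimately have "phi n x \<le> real n * x ^ 2" using phi_bounds[of x n] by auto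
    also have "\<dots> \<le> real n * (q ^ k * x)" using x by (intro mult_left_mono) (auto simp: power2_eq_square)
    finally have "real n * phi n x \<le> real n * (real n * (q ^ k * x))" by (intro mult_left_mono) auto
    then show "real n * phi n x \<le> (real n ^ 2 * q ^ k) * x" by (simp add: power2_eq_square algebra_simps)
  qed
  ultimately show "norm (Lev i (\<lambda>x. real n * phi n x) k) \<le> real n ^ 2 * q ^ k"
    using Lev_id[OF i] by simp
qed

lemma FF_diff:
  assumes i: "i \<in> {0,1}" and n: "1 \<le> n"
  shows "FF i (Suc n) - FF i n = (\<Sum>k. Lev i (Phi n) k)"
proof -
  have pw: "\<And>x. real (Suc n) * phi (Suc n) x - real n * phi n x = Phi n x"
  proof -
    fix x :: real
    have h: "(1 - x) ^ (Suc n - 1) = (1 - x) ^ (n - 1) * (1 - x)" using n by (cases n) auto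
    show "real (Suc n) * phi (Suc n) x - real n * phi n x = Phi n x"
      unfolding phi_def Phi_def h by (simp add: algebra_simps)
  qed
  have "FF i (Suc n) - FF i n = (\<Sum>k. Lev i (\<lambda>x. real (Suc n) * phi (Suc n) x) k - Lev i (\<lambda>x. real n * phi n x) k)"
    unfolding FF_def by (rule suminf_diff[OF FF_summable[OF i] FF_summable[OF i]])
  also have "\<dots> = (\<Sum>k. Lev i (Phi n) k)" unfolding Lev_diff[symmetric] pw ..
  finally show ?thesis .
qed

lemma FF_0: "FF i 0 = 0" by (simp add: FF_def Lev_def)
lemma FF_1: "FF i (Suc 0) = 0" by (simp add: FF_def Lev_def phi_def)

end


context mchain
begin
definition CC :: real where "CC = CB + 2 / HH"

lemma nlogn_step: "1 \<le> n \<Longrightarrow> \<bar>nlogn (Suc n) - nlogn n - ln (real n)\<bar> \<le> 2"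
proof -
  assume n: "1 \<le> n"
  have e: "nlogn (Suc n) - nlogn n - ln (real n) = (real n + 1) * ln (1 + 1 / real n)"
  proof -
    have "1 + 1 / real n = (real n + 1) / real n" using n by (simp add: field_simps)
    then have l: "ln (1 + 1 / real n) = ln (real n + 1) - ln (real n)" using n
      by (simp add: ln_div)
    have a1: "nlogn (Suc n) = real n * ln (real n + 1) + ln (real n + 1)"
      by (simp add: nlogn_def algebra_simps)
    have a2: "nlogn n = real n * ln (real n)" using n by (simp add: nlogn_def)
    have a3: "(real n + 1) * ln (1 + 1 / real n) = real n * ln (real n + 1) + ln (real n + 1) - real n * ln (real n) - ln (real n)"
      unfolding l by (simp add: algebra_simps)
    show ?thesis unfolding a1 a2 a3 by simp
  qed
  have a: "0 \<le> ln (1 + 1 / real n)" using n by simp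
  have b: "ln (1 + 1 / real n) \<le> 1 / real n" using n by (intro ln_add_one_self_le_self) simp
  have "(real n + 1) * ln (1 + 1 / real n) \<le> (real n + 1) * (1 / real n)" using b by (intro mult_left_mono) auto
  also have "\<dots> \<le> 2" using n by (simp add: field_simps)
  finally show ?thesis unfolding e using a by simp
qed

lemma CC_pos: "0 < CC"
proof -
  have "0 < AA" by (simp add: AA_def)
  moreover have "0 < MM" using q_bounds by (simp add: MM_def)
  moreover have "0 \<le> KK" unfolding KK_def using HH_pos pmin_bounds
    by (intro add_nonneg_nonneg divide_nonneg_pos) (auto simp: pmin_def min_def plt1 less_imp_le)
  moreover have "0 < 2 / HH" using HH_pos by simp
  moreover have "0 \<le> \<bar>hh 0\<bar>" by simp
  ultimately show ?thesis unfolding CC_def CB_def by linarith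
qed


lemma fstep: assumes i: "i \<in> {0,1}"
  shows "\<bar>(FF i (Suc n) - nlogn (Suc n) / HH) - (FF i n - nlogn n / HH)\<bar> \<le> CC"
proof (cases "n = 0")
  case True then show ?thesis using CC_pos by (simp add: FF_0 FF_1 nlogn_def)
next
  case False
  then have n: "1 \<le> n" by simp
  have S: "\<bar>(FF i (Suc n) - FF i n) - ln (real n) / HH\<bar> \<le> CB" using S_bound[OF i n] FF_diff[OF i n] by simp
  have T: "\<bar>(nlogn (Suc n) - nlogn n - ln (real n)) / HH\<bar> \<le> 2 / HH"
  proof -
    have "\<bar>nlogn (Suc n) - nlogn n - ln (real n)\<bar> / HH \<le> 2 / HH"
      using nlogn_step[OF n] HH_pos by (intro divide_right_mono) auto
    moreover have "\<bar>HH\<bar> = HH" using HH_pos by simp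
    ultimately show ?thesis by (simp only: abs_divide)
  qed
  have eq: "(FF i (Suc n) - nlogn (Suc n) / HH) - (FF i n - nlogn n / HH) =
      ((FF i (Suc n) - FF i n) - ln (real n) / HH) - ((nlogn (Suc n) - nlogn n - ln (real n)) / HH)"
    by (simp only: diff_divide_distrib)
  have "\<bar>(FF i (Suc n) - nlogn (Suc n) / HH) - (FF i n - nlogn n / HH)\<bar> \<le>
      \<bar>(FF i (Suc n) - FF i n) - ln (real n) / HH\<bar> + \<bar>(nlogn (Suc n) - nlogn n - ln (real n)) / HH\<bar>"
    unfolding eq by (rule abs_triangle_ineq4)
  then show ?thesis using S T unfolding CC_def by linarith
qed

end

lemma lipschitz_from_steps:
  fixes g :: "nat \<Rightarrow> real"
  assumes "\<And>n. \<bar>g (Suc n) - g n\<bar> \<le> C"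
  shows "\<bar>g m - g n\<bar> \<le> C * \<bar>real m - real n\<bar>"
proof -
  have main: "\<And>d n. \<bar>g (n + d) - g n\<bar> \<le> C * real d"
  proof -
    fix d n show "\<bar>g (n + d) - g n\<bar> \<le> C * real d"
    proof (induction d)
      case 0 then show ?case by simp
    next
      case (Suc d)
      have "\<bar>g (n + Suc d) - g n\<bar> \<le> \<bar>g (Suc (n + d)) - g (n + d)\<bar> + \<bar>g (n + d) - g n\<bar>" by simp
      also have "\<dots> \<le> C + C * real d" using assms Suc.IH by (intro add_mono) auto
      finally show ?case by (simp add: algebra_simps)
    qed
  qed
  show ?thesis
  proof (cases "n \<le> m")
    case True
    then obtain d where "m = n + d" using le_Suc_ex by blast
    then show ?thesis using main[of n d] by simp
  next
    case False
    then obtain d where "n = m + d" by (metis le_Suc_ex nat_le_linear)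
    then show ?thesis using main[of m d] by (simp add: abs_minus_commute)
  qed
qed




locale mstr = mchain p for p :: "nat \<Rightarrow> nat \<Rightarrow> real" +
  fixes M :: "'a measure" and xi :: "nat \<Rightarrow> 'a \<Rightarrow> nat \<Rightarrow> nat" and i :: nat
  assumes ms: "markov_strings M xi (p i) p" and i01: "i \<in> {0,1}"
begin

sublocale P: prob_space M using ms by (simp add: markov_strings_def)

lemma indep: "P.indep_vars (\<lambda>_. Pi\<^sub>M UNIV (\<lambda>_. count_space UNIV)) xi UNIV"
  using ms by (simp add: markov_strings_def)

lemma xi_meas: "xi l \<in> measurable M (Pi\<^sub>M UNIV (\<lambda>_. count_space UNIV))"
  using indep by (simp add: P.indep_vars_def)

lemma coord_meas[measurable]: "(\<lambda>\<omega>. xi l \<omega> t) \<in> measurable M (count_space UNIV)"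
  using measurable_compose[OF xi_meas measurable_component_singleton[of t UNIV "\<lambda>_. count_space UNIV"]]
  by simp

definition A :: "nat \<Rightarrow> nat list \<Rightarrow> 'a set" where
  "A l w = {\<omega> \<in> space M. \<forall>t<length w. xi l \<omega> t = w ! t}"

lemma A_sets[measurable]: "A l w \<in> sets M"
proof -
  have "\<And>t v. {\<omega> \<in> space M. xi l \<omega> t = v} \<in> sets M"
  proof -
    fix t v
    have "{\<omega> \<in> space M. xi l \<omega> t = v} = (\<lambda>\<omega>. xi l \<omega> t) -` {v} \<inter> space M" by auto
    then show "{\<omega> \<in> space M. xi l \<omega> t = v} \<in> sets M"
      using measurable_sets[OF coord_meas[of l t], of "{v}"] by simp
  qed
  note H = this
  have eq: "A l w = space M - (\<Union>t\<in>{..<length w}. space M - {\<omega> \<in> space M. xi l \<omega> t = w ! t})"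
    unfolding A_def by auto
  show ?thesis unfolding eq
    by (intro sets.Diff[OF sets.top] sets.finite_UN finite_lessThan H)
qed

lemma ms3: "\<And>j w. set w \<subseteq> {0, 1} \<Longrightarrow> measure M {\<omega> \<in> space M. \<forall>t<length w. xi j \<omega> t = w ! t} = word_prob (p i) p w"
  using ms unfolding markov_strings_def by blast

lemma A_prob: "w \<in> W k \<Longrightarrow> P.prob (A l w) = pr i w"
  unfolding A_def pr_def by (rule ms3) (simp add: W_def)

definition E :: "nat \<Rightarrow> nat \<Rightarrow> nat \<Rightarrow> 'a set" where
  "E n j k = {\<omega> \<in> space M. \<exists>l<n. l \<noteq> j \<and> (\<forall>t<k. xi l \<omega> t = xi j \<omega> t)}"

lemma eq1_sets: "{\<omega> \<in> space M. xi l \<omega> t = xi j \<omega> t} \<in> sets M"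
proof -
  have "{\<omega> \<in> space M. xi l \<omega> t = xi j \<omega> t} = (\<Union>v. {\<omega> \<in> space M. xi l \<omega> t = v} \<inter> {\<omega> \<in> space M. xi j \<omega> t = v})"
    by auto
  moreover have "\<And>l v. {\<omega> \<in> space M. xi l \<omega> t = v} \<in> sets M"
  proof -
    fix l v
    have "{\<omega> \<in> space M. xi l \<omega> t = v} = (\<lambda>\<omega>. xi l \<omega> t) -` {v} \<inter> space M" by auto
    then show "{\<omega> \<in> space M. xi l \<omega> t = v} \<in> sets M"
      using measurable_sets[OF coord_meas[of l t], of "{v}"] by simp
  qed
  ultimately show ?thesis by (auto intro!: sets.countable_UN)
qed

lemma eqset_sets[measurable]: "{\<omega> \<in> space M. \<forall>t<k. xi l \<omega> t = xi j \<omega> t} \<in> sets M"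
proof -
  have eq: "{\<omega> \<in> space M. \<forall>t<k. xi l \<omega> t = xi j \<omega> t} =
      space M - (\<Union>t\<in>{..<k}. space M - {\<omega> \<in> space M. xi l \<omega> t = xi j \<omega> t})" by auto
  show ?thesis unfolding eq
    by (intro sets.Diff[OF sets.top] sets.finite_UN finite_lessThan eq1_sets)
qed

lemma E_sets[measurable]: "E n j k \<in> sets M"
proof -
  have eq: "E n j k = (\<Union>l\<in>{..<n} - {j}. {\<omega> \<in> space M. \<forall>t<k. xi l \<omega> t = xi j \<omega> t})"
    unfolding E_def by auto
  show ?thesis unfolding eq
    by (intro sets.finite_UN finite_Diff finite_lessThan eqset_sets)
qed

abbreviation PM where "PM \<equiv> Pi\<^sub>M UNIV (\<lambda>_::nat. count_space (UNIV::nat set))"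

definition S :: "nat list \<Rightarrow> (nat \<Rightarrow> nat) set" where
  "S w = {f \<in> space PM. \<forall>t<length w. f t = w ! t}"

lemma S_sets: "S w \<in> sets PM"
proof -
  have H: "\<And>t. (\<lambda>f. f t) -` {w ! t} \<inter> space PM \<in> sets PM"
    by (rule measurable_sets[OF measurable_component_singleton]) auto
  have eq: "S w = space PM - (\<Union>t\<in>{..<length w}. space PM - ((\<lambda>f. f t) -` {w ! t} \<inter> space PM))"
    unfolding S_def by auto
  show ?thesis unfolding eq by (intro sets.Diff[OF sets.top] sets.finite_UN finite_lessThan H)
qed

lemma A_pre: "A l w = xi l -` S w \<inter> space M"
  using measurable_space[OF xi_meas[of l]] unfolding A_def S_def by auto

lemma A_compl_pre: "space M - A l w = xi l -` (space PM - S w) \<inter> space M"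
  using measurable_space[OF xi_meas[of l]] unfolding A_def S_def by auto

lemma indep_sets: "P.indep_sets (\<lambda>l. {xi l -` X \<inter> space M | X. X \<in> sets PM}) UNIV"
  using indep unfolding P.indep_vars_def2 by simp

lemma indep_prod:
  assumes w: "w \<in> W k" and L: "j \<notin> L" "finite L"
  shows "P.prob (A j w \<inter> (\<Inter>l\<in>L. space M - A l w)) = pr i w * (1 - pr i w) ^ card L"
proof -
  define B where "B l = (if l = j then A j w else space M - A l w)" for l
  have inter: "(\<Inter>l\<in>insert j L. B l) = A j w \<inter> (\<Inter>l\<in>L. space M - A l w)"
    using L by (auto simp: B_def)
  have mem: "\<forall>l\<in>insert j L. B l \<in> {xi l -` X \<inter> space M | X. X \<in> sets PM}"
  proof
    fix l assume "l \<in> insert j L"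
    show "B l \<in> {xi l -` X \<inter> space M | X. X \<in> sets PM}"
    proof (cases "l = j")
      case True
      then have "B l = xi l -` S w \<inter> space M" unfolding B_def using A_pre by simp
      then show ?thesis using S_sets by (intro CollectI exI[of _ "S w"] conjI) auto
    next
      case False
      have "space PM - S w \<in> sets PM" using S_sets by (rule sets.compl_sets)
      moreover have "B l = xi l -` (space PM - S w) \<inter> space M" unfolding B_def using False A_compl_pre by simp
      ultimately show ?thesis by (intro CollectI exI[of _ "space PM - S w"] conjI) auto
    qed
  qed
  have "P.prob (\<Inter>l\<in>insert j L. B l) = (\<Prod>l\<in>insert j L. P.prob (B l))"
    by (rule P.indep_setsD[OF indep_sets _ _ _ mem]) (use L in auto)
  also have "\<dots> = P.prob (A j w) * (\<Prod>l\<in>L. P.prob (space M - A l w))"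
  proof -
    have "(\<Prod>l\<in>L. P.prob (B l)) = (\<Prod>l\<in>L. P.prob (space M - A l w))"
      by (rule prod.cong) (use L in \<open>auto simp: B_def\<close>)
    then show ?thesis unfolding prod.insert[OF L(2) L(1)] by (simp add: B_def)
  qed
  also have "(\<Prod>l\<in>L. P.prob (space M - A l w)) = (\<Prod>l\<in>L. 1 - pr i w)"
    by (rule prod.cong) (use A_prob[OF w] P.prob_compl[OF A_sets] in auto)
  finally show ?thesis using inter A_prob[OF w] by simp
qed

lemma A_disj: "w \<in> W k \<Longrightarrow> w' \<in> W k \<Longrightarrow> w \<noteq> w' \<Longrightarrow> A l w \<inter> A l w' = {}"
proof -
  assume w: "w \<in> W k" "w' \<in> W k" "w \<noteq> w'"
  { fix \<omega> assume "\<omega> \<in> A l w" "\<omega> \<in> A l w'"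
    then have "\<forall>t<k. w ! t = w' ! t" using w unfolding A_def W_def by auto
    then have "w = w'" using w unfolding W_def by (auto intro: nth_equalityI)
    then have False using w by simp }
  then show ?thesis by blast
qed

lemma G_prob: "P.prob (\<Union>w\<in>W k. A l w) = 1"
proof -
  have "P.prob (\<Union>w\<in>W k. A l w) = (\<Sum>w\<in>W k. P.prob (A l w))"
    by (rule P.finite_measure_finite_Union) (auto simp: finite_W disjoint_family_on_def A_disj)
  also have "\<dots> = (\<Sum>w\<in>W k. pr i w)" by (rule sum.cong) (auto simp: A_prob)
  also have "\<dots> = Lev i (\<lambda>x. 1 * x) k" by (simp add: Lev_def)
  also have "\<dots> = 1" by (rule Lev_id[OF i01])
  finally show ?thesis .
qed

lemma E_prob:
  assumes j: "j < n"
  shows "P.prob (E n j k) = Lev i (phi n) k"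
proof -
  define L where "L = {..<n} - {j}"
  have L: "j \<notin> L" "finite L" "card L = n - 1" using j by (auto simp: L_def)
  define G where "G = (\<Union>w\<in>W k. A j w)"
  have Gs: "G \<in> sets M" unfolding G_def by (intro sets.finite_UN finite_W A_sets)
  have AEG: "AE \<omega> in M. \<omega> \<in> G" using P.AE_prob_1 G_prob unfolding G_def by blast
  have "P.prob (E n j k) = P.prob (E n j k \<inter> G)"
    by (rule P.finite_measure_eq_AE) (use AEG E_sets Gs in auto)
  also have "E n j k \<inter> G = (\<Union>w\<in>W k. A j w - (A j w - (\<Union>l\<in>L. A l w)))"
  proof -
    have "\<And>w. w \<in> W k \<Longrightarrow> A j w \<inter> E n j k = A j w - (A j w - (\<Union>l\<in>L. A l w))"
      unfolding A_def E_def L_def W_def by auto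
    then show ?thesis unfolding G_def by blast
  qed
  also have "P.prob \<dots> = (\<Sum>w\<in>W k. P.prob (A j w - (A j w - (\<Union>l\<in>L. A l w))))"
  proof (rule P.finite_measure_finite_Union)
    show "finite (W k)" by (rule finite_W)
    show "(\<lambda>w. A j w - (A j w - (\<Union>l\<in>L. A l w))) ` W k \<subseteq> P.events"
      using L by (auto intro!: sets.Diff sets.finite_UN A_sets)
    show "disjoint_family_on (\<lambda>w. A j w - (A j w - (\<Union>l\<in>L. A l w))) (W k)"
      unfolding disjoint_family_on_def using A_disj by blast
  qed
  also have "\<dots> = (\<Sum>w\<in>W k. phi n (pr i w))"
  proof (rule sum.cong[OF refl])
    fix w assume w: "w \<in> W k"
    have s1: "A j w - (\<Union>l\<in>L. A l w) \<in> sets M" using L by (intro sets.Diff sets.finite_UN A_sets) auto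
    have d: "P.prob (A j w - (A j w - (\<Union>l\<in>L. A l w))) = P.prob (A j w) - P.prob (A j w - (\<Union>l\<in>L. A l w))"
      by (rule P.finite_measure_Diff[OF A_sets s1]) auto
    have e: "A j w - (\<Union>l\<in>L. A l w) = A j w \<inter> (\<Inter>l\<in>L. space M - A l w)"
      unfolding A_def by auto
    have f: "P.prob (A j w - (\<Union>l\<in>L. A l w)) = pr i w * (1 - pr i w) ^ (n - 1)"
      unfolding e using indep_prod[OF w L(1,2)] L(3) by simp
    have "P.prob (A j w - (A j w - (\<Union>l\<in>L. A l w))) = pr i w - pr i w * (1 - pr i w) ^ (n - 1)"
      using d f A_prob[OF w, of j] by linarith
    then show "P.prob (A j w - (A j w - (\<Union>l\<in>L. A l w))) = phi n (pr i w)"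
      by (simp add: phi_def algebra_simps)
  qed
  also have "\<dots> = Lev i (phi n) k" by (simp add: Lev_def)
  finally show ?thesis .
qed

definition Dep :: "nat \<Rightarrow> nat \<Rightarrow> 'a \<Rightarrow> nat" where
  "Dep n j \<omega> = depth (\<lambda>j. xi j \<omega>) n j"

definition Pk :: "nat \<Rightarrow> nat \<Rightarrow> nat \<Rightarrow> 'a \<Rightarrow> bool" where
  "Pk n j k \<omega> = (\<forall>l<n. l \<noteq> j \<longrightarrow> (\<exists>t<k. xi l \<omega> t \<noteq> xi j \<omega> t))"

lemma Dep_Least: "Dep n j \<omega> = (LEAST k. Pk n j k \<omega>)"
  unfolding Dep_def depth_def Pk_def ..

lemma Pk_E: "\<omega> \<in> space M \<Longrightarrow> Pk n j k \<omega> \<longleftrightarrow> \<omega> \<notin> E n j k"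
  unfolding Pk_def E_def by auto

lemma Pk_mono: "Pk n j a \<omega> \<Longrightarrow> a \<le> b \<Longrightarrow> Pk n j b \<omega>"
  unfolding Pk_def by (meson order_less_le_trans)

lemma Pk_meas: "(\<lambda>\<omega>. Pk n j k \<omega>) \<in> measurable M (count_space UNIV)"
proof -
  have "{\<omega> \<in> space M. Pk n j k \<omega>} = space M - E n j k" using Pk_E by auto
  then have "{\<omega> \<in> space M. Pk n j k \<omega>} \<in> sets M" using E_sets by simp
  then show ?thesis using pred_def by blast
qed

lemma Dep_meas: "Dep n j \<in> measurable M (count_space UNIV)"
proof -
  have "(\<lambda>\<omega>. LEAST k. Pk n j k \<omega>) \<in> measurable M (count_space UNIV)"
    by (rule measurable_Least) (rule Pk_meas)
  moreover have "Dep n j = (\<lambda>\<omega>. LEAST k. Pk n j k \<omega>)" using Dep_Least by (intro ext) simp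
  ultimately show ?thesis by simp
qed

lemma Dep_gt:
  assumes \<omega>: "\<omega> \<in> space M" and k0: "\<omega> \<notin> E n j k0"
  shows "k < Dep n j \<omega> \<longleftrightarrow> \<omega> \<in> E n j k"
proof -
  have P0: "Pk n j k0 \<omega>" using Pk_E[OF \<omega>] k0 by simp
  have PL: "Pk n j (Dep n j \<omega>) \<omega>" unfolding Dep_Least by (rule LeastI[of _ k0]) (rule P0)
  show ?thesis
  proof
    assume "k < Dep n j \<omega>"
    then have "\<not> Pk n j k \<omega>" unfolding Dep_Least by (rule not_less_Least)
    then show "\<omega> \<in> E n j k" using Pk_E[OF \<omega>] by simp
  next
    assume "\<omega> \<in> E n j k"
    then have nP: "\<not> Pk n j k \<omega>" using Pk_E[OF \<omega>] by simp
    show "k < Dep n j \<omega>"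
    proof (rule ccontr)
      assume "\<not> k < Dep n j \<omega>"
      then have "Dep n j \<omega> \<le> k" by simp
      then have "Pk n j k \<omega>" using Pk_mono[OF PL] by blast
      then show False using nP by simp
    qed
  qed
qed

lemma Lev_phi_le: "Lev i (phi n) k \<le> real n * q ^ k"
proof -
  have "Lev i (phi n) k \<le> Lev i (\<lambda>x. (real n * q ^ k) * x) k"
  proof (rule Lev_mono[OF i01])
    fix x :: real assume x: "0 < x" "x \<le> q ^ k"
    moreover have "q ^ k \<le> 1" using q_bounds by (simp add: power_le_one)
    ultimately have "phi n x \<le> real n * x ^ 2" using phi_bounds[of x n] by auto
    also have "\<dots> \<le> real n * (q ^ k * x)" using x by (intro mult_left_mono) (auto simp: power2_eq_square)
    finally show "phi n x \<le> (real n * q ^ k) * x" by (simp add: algebra_simps)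
  qed
  then show ?thesis using Lev_id[OF i01] by simp
qed

lemma Lev_phi_nonneg: "0 \<le> Lev i (phi n) k"
proof (rule Lev_nonneg[OF i01])
  fix x :: real assume "0 < x" "x \<le> q ^ k"
  moreover have "q ^ k \<le> 1" using q_bounds by (simp add: power_le_one)
  ultimately show "0 \<le> phi n x" using phi_bounds[of x n] by auto
qed

lemma Lev_phi_summable: "summable (\<lambda>k. Lev i (phi n) k)"
proof (rule summable_comparison_test'[where N=0])
  show "summable (\<lambda>k. real n * q ^ k)" using q_bounds by (intro summable_mult summable_geometric) auto
  fix k :: nat show "norm (Lev i (phi n) k) \<le> real n * q ^ k"
    using Lev_phi_le Lev_phi_nonneg by simp
qed

definition N0 :: "nat \<Rightarrow> nat \<Rightarrow> 'a set" where
  "N0 n j = space M - (\<Union>k. space M - E n j k)"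

lemma N0_sets: "N0 n j \<in> sets M"
  unfolding N0_def by (intro sets.Diff sets.top sets.countable_UN' E_sets) auto

lemma N0_null: assumes jn: "j < n" shows "N0 n j \<in> null_sets M"
proof -
  have le: "\<And>k. P.prob (N0 n j) \<le> real n * q ^ k"
  proof -
    fix k
    have "N0 n j \<subseteq> E n j k" unfolding N0_def using E_sets[THEN sets.sets_into_space] by blast
    then have "P.prob (N0 n j) \<le> P.prob (E n j k)" by (intro P.finite_measure_mono E_sets)
    also have "\<dots> \<le> real n * q ^ k" using E_prob[OF jn] Lev_phi_le by simp
    finally show "P.prob (N0 n j) \<le> real n * q ^ k" .
  qed
  have "P.prob (N0 n j) = 0"
  proof (rule ccontr)
    assume "P.prob (N0 n j) \<noteq> 0"
    then have pos: "0 < P.prob (N0 n j)" using measure_nonneg[of M "N0 n j"] by linarith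
    then obtain k where k: "q ^ k < P.prob (N0 n j) / (real n + 1)"
      using real_arch_pow_inv[of "P.prob (N0 n j) / (real n + 1)" q] q_bounds by auto
    have "real n * q ^ k \<le> (real n + 1) * q ^ k" using q_bounds by (intro mult_right_mono) auto
    also have "\<dots> < (real n + 1) * (P.prob (N0 n j) / (real n + 1))" using k by (intro mult_strict_left_mono) auto
    also have "\<dots> = P.prob (N0 n j)" by simp
    finally show False using le[of k] by simp
  qed
  then show ?thesis using N0_sets by (simp add: P.emeasure_eq_measure null_sets_def)
qed

lemma AE_good: "j < n \<Longrightarrow> AE \<omega> in M. \<exists>k. \<omega> \<notin> E n j k"
proof (rule AE_I'[OF N0_null])
  show "{\<omega> \<in> space M. \<not> (\<exists>k. \<omega> \<notin> E n j k)} \<subseteq> N0 n j" unfolding N0_def by auto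
qed

lemma Dep_gt_sets: "{\<omega> \<in> space M. k < Dep n j \<omega>} \<in> sets M"
proof -
  have "{\<omega> \<in> space M. k < Dep n j \<omega>} = Dep n j -` {Suc k..} \<inter> space M" by auto
  then show ?thesis using measurable_sets[OF Dep_meas, of "{Suc k..}"] by simp
qed

lemma Dep_nn: assumes jn: "j < n"
  shows "(\<integral>\<^sup>+\<omega>. of_nat (Dep n j \<omega>) \<partial>M) = ennreal (\<Sum>k. Lev i (phi n) k)"
proof -
  have "(\<integral>\<^sup>+\<omega>. of_nat (Dep n j \<omega>) \<partial>M) = (\<Sum>k. emeasure M {\<omega> \<in> space M. k < Dep n j \<omega>})"
    by (rule nn_integral_nat_function[OF Dep_meas])
  also have "\<dots> = (\<Sum>k. ennreal (Lev i (phi n) k))"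
  proof (rule suminf_cong)
    fix k
    have "emeasure M {\<omega> \<in> space M. k < Dep n j \<omega>} = emeasure M (E n j k)"
    proof (rule emeasure_eq_AE[OF _ Dep_gt_sets E_sets])
      show "AE \<omega> in M. (\<omega> \<in> {\<omega> \<in> space M. k < Dep n j \<omega>}) = (\<omega> \<in> E n j k)"
        using AE_good[OF jn] by (rule AE_mp) (auto intro!: AE_I2 simp: Dep_gt E_def)
    qed
    also have "\<dots> = ennreal (Lev i (phi n) k)" using E_prob[OF jn] by (simp add: P.emeasure_eq_measure)
    finally show "emeasure M {\<omega> \<in> space M. k < Dep n j \<omega>} = ennreal (Lev i (phi n) k)" .
  qed
  also have "\<dots> = ennreal (\<Sum>k. Lev i (phi n) k)"
    by (rule suminf_ennreal2[OF Lev_phi_nonneg Lev_phi_summable])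
  finally show ?thesis .
qed

lemma Dep_real_meas: "(\<lambda>\<omega>. real (Dep n j \<omega>)) \<in> borel_measurable M"
  using measurable_compose[OF Dep_meas, of real borel] by (simp add: measurable_count_space)

lemma Dep_integrable: "j < n \<Longrightarrow> integrable M (\<lambda>\<omega>. real (Dep n j \<omega>))"
proof (rule integrableI_nonneg[OF Dep_real_meas])
  assume jn: "j < n"
  show "AE x in M. 0 \<le> real (Dep n j x)" by simp
  have "(\<integral>\<^sup>+x. ennreal (real (Dep n j x)) \<partial>M) = ennreal (\<Sum>k. Lev i (phi n) k)"
    using Dep_nn[OF jn] by (simp add: ennreal_of_nat_eq_real_of_nat)
  then show "(\<integral>\<^sup>+x. ennreal (real (Dep n j x)) \<partial>M) < \<infinity>" by simp
qed

lemma Dep_integral: "j < n \<Longrightarrow> (\<integral>\<omega>. real (Dep n j \<omega>) \<partial>M) = (\<Sum>k. Lev i (phi n) k)"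
proof -
  assume jn: "j < n"
  have "(\<integral>\<omega>. real (Dep n j \<omega>) \<partial>M) = enn2real (\<integral>\<^sup>+x. ennreal (real (Dep n j x)) \<partial>M)"
    by (rule integral_eq_nn_integral[OF Dep_real_meas]) simp
  also have "(\<integral>\<^sup>+x. ennreal (real (Dep n j x)) \<partial>M) = ennreal (\<Sum>k. Lev i (phi n) k)"
    using Dep_nn[OF jn] by (simp add: ennreal_of_nat_eq_real_of_nat)
  finally show ?thesis using suminf_nonneg[OF Lev_phi_summable Lev_phi_nonneg] by simp
qed

lemma expect_B: "(\<integral>\<omega>. real (bucket_ops (\<lambda>j. xi j \<omega>) n) \<partial>M) = FF i n"
proof -
  have "(\<lambda>\<omega>. real (bucket_ops (\<lambda>j. xi j \<omega>) n)) = (\<lambda>\<omega>. \<Sum>j<n. real (Dep n j \<omega>))"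
    by (simp add: bucket_ops_def Dep_def)
  then have "(\<integral>\<omega>. real (bucket_ops (\<lambda>j. xi j \<omega>) n) \<partial>M) = (\<Sum>j<n. \<integral>\<omega>. real (Dep n j \<omega>) \<partial>M)"
    using Dep_integrable by (simp add: integral_sum)
  also have "\<dots> = (\<Sum>j<n. \<Sum>k. Lev i (phi n) k)" by (rule sum.cong) (auto simp: Dep_integral)
  also have "\<dots> = real n * (\<Sum>k. Lev i (phi n) k)" by simp
  also have "\<dots> = (\<Sum>k. real n * Lev i (phi n) k)" by (rule suminf_mult[OF Lev_phi_summable, symmetric])
  also have "\<dots> = FF i n"
  proof -
    have "\<And>k. Lev i (\<lambda>x. real n * phi n x) k = real n * Lev i (phi n) k" by (rule Lev_cmult)
    then show ?thesis unfolding FF_def by presburger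
  qed
  finally show ?thesis .
qed

end

theorem proposition5p2:
  fixes p :: "nat \<Rightarrow> nat \<Rightarrow> real"
  assumes "\<forall>i\<in>{0,1::nat}. \<forall>j\<in>{0,1::nat}. 0 < p i j \<and> p i j < 1"
    and "\<forall>i\<in>{0,1::nat}. p i 0 + p i 1 = 1"
    and "\<exists>i\<in>{0,1::nat}. \<exists>j\<in>{0,1::nat}. p i j \<noteq> 1/2"
  shows "\<exists>C>0. \<forall>i\<in>{0,1::nat}. \<forall>(M::'a measure) xi.
           markov_strings M xi (p i) p \<longrightarrow>
           (\<forall>m n::nat. \<bar>f_dev M xi p m - f_dev M xi p n\<bar> \<le> C * \<bar>real m - real n\<bar>)"
proof -
  interpret mchain p
  proof
    fix i j :: nat assume "i \<in> {0,1}" "j \<in> {0,1}"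
    then show "0 < p i j" "p i j < 1" using assms(1) by auto
  next
    fix i :: nat assume "i \<in> {0,1}"
    then show "p i 0 + p i 1 = 1" using assms(2) by auto
  qed
  have main: "\<And>i (M::'a measure) xi m n. i \<in> {0,1} \<Longrightarrow> markov_strings M xi (p i) p \<Longrightarrow>
      \<bar>f_dev M xi p m - f_dev M xi p n\<bar> \<le> CC * \<bar>real m - real n\<bar>"
  proof -
    fix i :: nat and M :: "'a measure" and xi m n
    assume i: "i \<in> {0,1}" and msi: "markov_strings M xi (p i) p"
    interpret S: mstr p M xi i by (rule mstr.intro[OF mchain_axioms]) (use msi i in \<open>unfold_locales\<close>)
    have f: "\<And>n. f_dev M xi p n = FF i n - nlogn n / HH"
      by (simp add: f_dev_def S.expect_B HH_def)
    have "\<And>k. \<bar>f_dev M xi p (Suc k) - f_dev M xi p k\<bar> \<le> CC"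
      unfolding f by (rule fstep[OF i])
    then show "\<bar>f_dev M xi p m - f_dev M xi p n\<bar> \<le> CC * \<bar>real m - real n\<bar>"
      by (rule lipschitz_from_steps)
  qed
  show ?thesis
    by (rule exI[of _ CC]) (use CC_pos main in blast)
qed

end
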